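(* Let $i\in\arg\max_x w^{\text{avg}}_x$. There exists $\rho_0>0$ such that for every $\rho\in(0,\rho_0]$, $$\Delta=\mathcal{W}(D_{\text{mask}})-\mathcal{W}(D_{\text{fair}})\ \ge\ \rho\cdot\max\Big(0,\ \max_{j\ne i,\ p\in\{0,1\}}\big\{R_p(j)-w^{\text{avg}}_i\big\}\Big),$$ where $R_p(j)=\dfrac{w_{i,\bar p}+w_{j,p}}{\Pr(P=\bar p\mid x_i)+\Pr(P=p\mid x_j)}$ with $\bar p=1-p$. (In particular, for such $\rho$ the optimal fair value is $\mathcal{W}(D_{\text{fair}})=\rho\, w^{\text{avg}}_i$.)
   Context: Fix an integer $k\ge 2$, $X\in\{1,\dots,k\}$, $P\in\{0,1\}$, $\pi_{x,p}=\Pr(X=x,P=p)>0$ with $\sum_{x,p}\pi_{x,p}=1$, $\Pr(X=x)=\pi_{x,0}+\pi_{x,1}$, $\Pr(P=p\mid x)=\pi_{x,p}/\Pr(X=x)$; write $x_i$ for the event $X=i$. Rewards $\gamma_{x,p}\in[0,1]$. Define $w_{x,p}=\gamma_{x,p}\Pr(P=p\mid x)$ and $w^{\text{avg}}_x=w_{x,0}+w_{x,1}$. Policies are $\alpha\in[0,1]^{2k}$ with objective $\mathcal{W}(\alpha)=\sum_{x,p}\gamma_{x,p}\alpha_{x,p}\pi_{x,p}$ and participation constraint $\sum_{x,p}\alpha_{x,p}\pi_{x,p}=\rho$. $\mathcal{W}(D_{\text{fair}})$ is the optimal value of maximizing $\mathcal{W}$ over $\alpha\in[0,1]^{2k}$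 subject to the participation constraint and $\alpha_{x,1}=\alpha_{x,0}$ for all $x$. $\mathcal{W}(D_{\text{mask}})$ is the optimal value of maximizing $\mathcal{W}$ over $\alpha\in[0,1]^{2k}$ subject to the participation constraint and the zero-ATE (masking) constraint $\sum_{x=1}^k\Pr(X=x)(\alpha_{x,1}-\alpha_{x,0})=0$. *)

theory Defs
  imports Complex_Main
begin

text \<open>Covariate values x range over {1..k}; protected attribute p over {0,1}.
  pr x p = Pr(X=x, P=p), gam x p = reward, alpha x p = policy.\<close>

definition PrX :: "(nat \<Rightarrow> nat \<Rightarrow> real) \<Rightarrow> nat \<Rightarrow> real" where
  "PrX pr x = pr x 0 + pr x 1"

definition PrP :: "(nat \<Rightarrow> nat \<Rightarrow> real) \<Rightarrow> nat \<Rightarrow> nat \<Rightarrow> real" where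
  "PrP pr x p = pr x p / PrX pr x"

definition wt :: "(nat \<Rightarrow> nat \<Rightarrow> real) \<Rightarrow> (nat \<Rightarrow> nat \<Rightarrow> real) \<Rightarrow> nat \<Rightarrow> nat \<Rightarrow> real" where
  "wt pr gam x p = gam x p * PrP pr x p"

definition wavg :: "(nat \<Rightarrow> nat \<Rightarrow> real) \<Rightarrow> (nat \<Rightarrow> nat \<Rightarrow> real) \<Rightarrow> nat \<Rightarrow> real" where
  "wavg pr gam x = wt pr gam x 0 + wt pr gam x 1"

definition Wobj :: "nat \<Rightarrow> (nat \<Rightarrow> nat \<Rightarrow> real) \<Rightarrow> (nat \<Rightarrow> nat \<Rightarrow> real) \<Rightarrow> (nat \<Rightarrow> nat \<Rightarrow> real) \<Rightarrow> real" where
  "Wobj k pr gam alpha = (\<Sum>x\<in>{1..k}. \<Sum>p\<in>{0,1}. gam x p * alpha x p * pr x p)"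

definition policy :: "nat \<Rightarrow> (nat \<Rightarrow> nat \<Rightarrow> real) \<Rightarrow> bool" where
  "policy k alpha = (\<forall>x\<in>{1..k}. \<forall>p\<in>{0,1::nat}. 0 \<le> alpha x p \<and> alpha x p \<le> 1)"

definition participation :: "nat \<Rightarrow> (nat \<Rightarrow> nat \<Rightarrow> real) \<Rightarrow> real \<Rightarrow> (nat \<Rightarrow> nat \<Rightarrow> real) \<Rightarrow> bool" where
  "participation k pr \<rho> alpha = ((\<Sum>x\<in>{1..k}. \<Sum>p\<in>{0,1}. alpha x p * pr x p) = \<rho>)"

definition W_fair :: "nat \<Rightarrow> (nat \<Rightarrow> nat \<Rightarrow> real) \<Rightarrow> (nat \<Rightarrow> nat \<Rightarrow> real) \<Rightarrow> real \<Rightarrow> real" where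
  "W_fair k pr gam \<rho> = Sup {Wobj k pr gam alpha | alpha. policy k alpha \<and> participation k pr \<rho> alpha
      \<and> (\<forall>x\<in>{1..k}. alpha x 1 = alpha x 0)}"

definition W_mask :: "nat \<Rightarrow> (nat \<Rightarrow> nat \<Rightarrow> real) \<Rightarrow> (nat \<Rightarrow> nat \<Rightarrow> real) \<Rightarrow> real \<Rightarrow> real" where
  "W_mask k pr gam \<rho> = Sup {Wobj k pr gam alpha | alpha. policy k alpha \<and> participation k pr \<rho> alpha
      \<and> (\<Sum>x\<in>{1..k}. PrX pr x * (alpha x 1 - alpha x 0)) = 0}"

definition Rratio :: "(nat \<Rightarrow> nat \<Rightarrow> real) \<Rightarrow> (nat \<Rightarrow> nat \<Rightarrow> real) \<Rightarrow> nat \<Rightarrow> nat \<Rightarrow> nat \<Rightarrow> real" where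
  "Rratio pr gam i p j = (wt pr gam i (1 - p) + wt pr gam j p) / (PrP pr i (1 - p) + PrP pr j p)"

end

theory Submission
  imports Defs
begin

lemma sum2:
  assumes "finite A" "i \<in> A" "j \<in> A" "i \<noteq> j" "\<forall>x\<in>A-{i,j}. g x = 0"
  shows "sum g A = g i + g j"
proof -
  have "sum g A = sum g {i,j}"
    using assms by (intro sum.mono_neutral_right) auto
  thus ?thesis using assms by simp
qed

lemma sum1:
  assumes "finite A" "i \<in> A" "\<forall>x\<in>A-{i}. g x = 0"
  shows "sum g A = g i"
proof -
  have "sum g A = sum g {i}"
    using assms by (intro sum.mono_neutral_right) auto
  thus ?thesis using assms by simp
qed

lemma Wobj_bound:
  assumes "\<forall>x\<in>{1..k}. \<forall>p\<in>{0,1::nat}. pr x p > 0"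
    and "(\<Sum>x\<in>{1..k}. \<Sum>p\<in>{0,1::nat}. pr x p) = 1"
    and "\<forall>x\<in>{1..k}. \<forall>p\<in>{0,1::nat}. 0 \<le> gam x p \<and> gam x p \<le> 1"
    and "policy k alpha"
  shows "Wobj k pr gam alpha \<le> 1"
proof -
  have "Wobj k pr gam alpha \<le> (\<Sum>x\<in>{1..k}. \<Sum>p\<in>{0,1::nat}. pr x p)"
    unfolding Wobj_def
  proof (intro sum_mono)
    fix x p assume x: "x \<in> {1..k}" and p: "p \<in> {0,1::nat}"
    have "gam x p * alpha x p \<le> 1" using assms(3,4) x p unfolding policy_def
      by (meson mult_le_one)
    moreover have "pr x p > 0" using assms(1) x p by blast
    ultimately show "gam x p * alpha x p * pr x p \<le> pr x p" by simp
  qed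
  thus ?thesis using assms(2) by simp
qed

lemma wavg_eq:
  assumes "pr x 0 > 0" "pr x 1 > 0"
  shows "PrX pr x * wavg pr gam x = gam x 0 * pr x 0 + gam x 1 * pr x 1"
proof -
  have h: "pr x 0 + pr x 1 \<noteq> 0" using assms by simp
  show ?thesis unfolding wavg_def wt_def PrP_def PrX_def
    using h by (simp add: distrib_left)
qed

theorem mainTheorem3:
  fixes k :: nat and pr gam :: "nat \<Rightarrow> nat \<Rightarrow> real" and i :: nat
  assumes "k \<ge> 2"
    and "\<forall>x\<in>{1..k}. \<forall>p\<in>{0,1::nat}. pr x p > 0"
    and "(\<Sum>x\<in>{1..k}. \<Sum>p\<in>{0,1::nat}. pr x p) = 1"
    and "\<forall>x\<in>{1..k}. \<forall>p\<in>{0,1::nat}. 0 \<le> gam x p \<and> gam x p \<le> 1"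
    and "i \<in> {1..k}" and "\<forall>x\<in>{1..k}. wavg pr gam x \<le> wavg pr gam i"
  shows "\<exists>\<rho>0>0. \<forall>\<rho>. 0 < \<rho> \<and> \<rho> \<le> \<rho>0 \<longrightarrow>
      W_mask k pr gam \<rho> - W_fair k pr gam \<rho> \<ge>
        \<rho> * max 0 (Max {Rratio pr gam i p j - wavg pr gam i | j p. j \<in> {1..k} - {i} \<and> p \<in> {0,1}})
      \<and> W_fair k pr gam \<rho> = \<rho> * wavg pr gam i"
proof -
  have pos: "\<And>x p. x \<in> {1..k} \<Longrightarrow> p \<in> {0,1::nat} \<Longrightarrow> pr x p > 0" using assms(2) by blast
  have pos0: "\<And>x. x \<in> {1..k} \<Longrightarrow> pr x 0 > 0" and pos1: "\<And>x. x \<in> {1..k} \<Longrightarrow> pr x 1 > 0"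
    using pos by auto
  have PrXpos: "\<And>x. x \<in> {1..k} \<Longrightarrow> PrX pr x > 0"
    using pos0 pos1 unfolding PrX_def by (simp add: add_pos_pos)
  define PS where "PS = (\<lambda>(x,p). pr x p) ` ({1..k} \<times> {0,1::nat})"
  define \<rho>0 where "\<rho>0 = Min PS"
  have PSfin: "finite PS" "PS \<noteq> {}" unfolding PS_def using assms(5) by auto
  have "\<rho>0 \<in> PS" unfolding \<rho>0_def using PSfin by (rule Min_in)
  hence r0pos: "\<rho>0 > 0" unfolding PS_def using pos by auto
  have r0le: "\<And>x p. x \<in> {1..k} \<Longrightarrow> p \<in> {0,1::nat} \<Longrightarrow> \<rho>0 \<le> pr x p"
    unfolding \<rho>0_def using PSfin(1) by (intro Min_le) (auto simp: PS_def)
  have main: "W_mask k pr gam \<rho> - W_fair k pr gam \<rho> \<ge>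
        \<rho> * max 0 (Max {Rratio pr gam i p j - wavg pr gam i | j p. j \<in> {1..k} - {i} \<and> p \<in> {0,1}})
      \<and> W_fair k pr gam \<rho> = \<rho> * wavg pr gam i" if rpos: "0 < \<rho>" and rle: "\<rho> \<le> \<rho>0" for \<rho>
  proof -
    have bdd: "bdd_above {Wobj k pr gam alpha | alpha. policy k alpha \<and> participation k pr \<rho> alpha
      \<and> (\<Sum>x\<in>{1..k}. PrX pr x * (alpha x 1 - alpha x 0)) = 0}"
      using Wobj_bound[OF assms(2,3,4)] by (intro bdd_aboveI[of _ 1]) auto
    have maskge: "Wobj k pr gam alpha \<le> W_mask k pr gam \<rho>"
      if "policy k alpha" "participation k pr \<rho> alpha"
         "(\<Sum>x\<in>{1..k}. PrX pr x * (alpha x 1 - alpha x 0)) = 0" for alpha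
      unfolding W_mask_def using that by (intro cSup_upper[OF _ bdd]) auto
    define af :: "nat \<Rightarrow> nat \<Rightarrow> real" where "af = (\<lambda>x p. if x = i then \<rho> / PrX pr i else (0::real))"
    have Xi: "PrX pr i > 0" using PrXpos assms(5) by blast
    have "\<rho> \<le> PrX pr i" using r0le[OF assms(5), of 0] rle pos1[OF assms(5)] unfolding PrX_def by auto
    hence afpol: "policy k af" unfolding policy_def af_def using Xi rpos by auto
    have afpart: "participation k pr \<rho> af" unfolding participation_def
      apply (subst sum1[OF _ assms(5)])
    proof -
      have "\<rho> / PrX pr i * pr i 0 + \<rho> / PrX pr i * pr i 1 = \<rho> / PrX pr i * PrX pr i"
        by (simp add: PrX_def distrib_left)
      thus "(\<Sum>p\<in>{0,1}. af i p * pr i p) = \<rho>" using Xi by (simp add: af_def)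
    qed (auto simp: af_def)
    have afW: "Wobj k pr gam af = \<rho> * wavg pr gam i"
      unfolding Wobj_def
      apply (subst sum1[OF _ assms(5)])
      using Xi wavg_eq[of pr i gam, OF pos0[OF assms(5)] pos1[OF assms(5)]]
      by (auto simp: af_def field_simps)
    have afmask: "(\<Sum>x\<in>{1..k}. PrX pr x * (af x 1 - af x 0)) = 0" by (simp add: af_def)
    have fairub: "Wobj k pr gam alpha \<le> \<rho> * wavg pr gam i"
      if "policy k alpha" "participation k pr \<rho> alpha" "\<forall>x\<in>{1..k}. alpha x 1 = alpha x 0" for alpha
    proof -
      have "Wobj k pr gam alpha = (\<Sum>x\<in>{1..k}. alpha x 0 * (PrX pr x * wavg pr gam x))"
        unfolding Wobj_def using that(3) wavg_eq pos0 pos1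
        by (intro sum.cong) (auto simp: algebra_simps)
      also have "\<dots> \<le> (\<Sum>x\<in>{1..k}. alpha x 0 * PrX pr x * wavg pr gam i)"
      proof (intro sum_mono)
        fix x assume x: "x \<in> {1..k}"
        have "0 \<le> alpha x 0 * PrX pr x" using that(1) x PrXpos[OF x] unfolding policy_def by simp
        thus "alpha x 0 * (PrX pr x * wavg pr gam x) \<le> alpha x 0 * PrX pr x * wavg pr gam i"
          using assms(6) x mult_left_mono[of "wavg pr gam x" "wavg pr gam i" "alpha x 0 * PrX pr x"]
          by (simp add: mult.assoc)
      qed
      also have "\<dots> = (\<Sum>x\<in>{1..k}. alpha x 0 * PrX pr x) * wavg pr gam i"
        by (simp add: sum_distrib_right)
      also have "(\<Sum>x\<in>{1..k}. alpha x 0 * PrX pr x) = \<rho>"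
        using that(2,3) unfolding participation_def PrX_def
        by (auto simp: algebra_simps intro!: sum.cong)
      finally show ?thesis by simp
    qed
    have fair: "W_fair k pr gam \<rho> = \<rho> * wavg pr gam i"
      unfolding W_fair_def
    proof (rule cSup_eq_maximum)
      have "\<forall>x\<in>{1..k}. af x 1 = af x 0" by (simp add: af_def)
      thus "\<rho> * wavg pr gam i \<in> {Wobj k pr gam alpha |alpha. policy k alpha \<and> participation k pr \<rho> alpha
      \<and> (\<forall>x\<in>{1..k}. alpha x 1 = alpha x 0)}"
        using afpol afpart afW by (intro CollectI exI[of _ af]) simp
    qed (use fairub in force)
    have m1: "\<rho> * wavg pr gam i \<le> W_mask k pr gam \<rho>"
      using maskge[OF afpol afpart afmask] afW by simp
    have m2: "\<rho> * Rratio pr gam i q j \<le> W_mask k pr gam \<rho>"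
      if j: "j \<in> {1..k} - {i}" and q: "q \<in> {0,1::nat}" for j q
    proof -
      have jk: "j \<in> {1..k}" "j \<noteq> i" using j by auto
      define D where "D = PrP pr i (1 - q) + PrP pr j q"
      have Pi: "pr i (1-q) > 0" using pos[OF assms(5)] q by auto
      have Pj: "pr j q > 0" using pos[OF jk(1)] q by auto
      have Xj: "PrX pr j > 0" using PrXpos jk by blast
      have Dpos: "D > 0" unfolding D_def PrP_def using Pi Pj Xi Xj by (simp add: add_pos_pos)
      define t where "t = \<rho> / D"
      have tpos: "t > 0" unfolding t_def using Dpos rpos by simp
      have PiX: "pr i (1-q) \<le> PrX pr i" and PjX: "pr j q \<le> PrX pr j"
        using q pos0[OF assms(5)] pos1[OF assms(5)] pos0[OF jk(1)] pos1[OF jk(1)] unfolding PrX_def by auto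
      have ri: "\<rho> \<le> pr i (1-q)" using r0le[OF assms(5), of "1-q"] q rle by auto
      have rj: "\<rho> \<le> pr j q" using r0le[OF jk(1) q] rle by auto
      have "t \<le> PrX pr i"
      proof -
        have "D \<ge> pr i (1-q) / PrX pr i" unfolding D_def PrP_def using Pj Xj by simp
        hence "t \<le> \<rho> / (pr i (1-q) / PrX pr i)" unfolding t_def using rpos Pi Xi Dpos
          by (intro divide_left_mono) auto
        also have "\<dots> = \<rho> / pr i (1-q) * PrX pr i" using Pi Xi by simp
        also have "\<dots> \<le> 1 * PrX pr i" using ri Pi Xi rpos
          by (intro mult_right_mono) auto
        finally show ?thesis by simp
      qed
      have "t \<le> PrX pr j"
      proof -
        have "D \<ge> pr j q / PrX pr j" unfolding D_def PrP_def using Pi Xi by simp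
        hence "t \<le> \<rho> / (pr j q / PrX pr j)" unfolding t_def using rpos Pj Xj Dpos
          by (intro divide_left_mono) auto
        also have "\<dots> = \<rho> / pr j q * PrX pr j" using Pj Xj by simp
        also have "\<dots> \<le> 1 * PrX pr j" using rj Pj Xj rpos
          by (intro mult_right_mono) auto
        finally show ?thesis by simp
      qed
      note tle = \<open>t \<le> PrX pr i\<close> this
      define am :: "nat \<Rightarrow> nat \<Rightarrow> real" where "am = (\<lambda>x p. if x = i \<and> p = 1 - q then t / PrX pr i
                                    else if x = j \<and> p = q then t / PrX pr j else (0::real))"
      have ampol: "policy k am" unfolding policy_def am_def using tle tpos Xi Xj by auto
      have ampart: "participation k pr \<rho> am" unfolding participation_def
        apply (subst sum2[OF _ assms(5) jk(1) jk(2)[symmetric]])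
      proof -
        have tD: "t * D = \<rho>" unfolding t_def using Dpos by simp
        have e: "t / PrX pr i * pr i (1-q) + t / PrX pr j * pr j q = \<rho>"
          using tD unfolding D_def PrP_def by (simp add: distrib_left)
        show "(\<Sum>p\<in>{0,1}. am i p * pr i p) + (\<Sum>p\<in>{0,1}. am j p * pr j p) = \<rho>"
          using e q jk(2) by (cases "q = 0") (auto simp: am_def)
      qed (auto simp: am_def)
      have ammask: "(\<Sum>x\<in>{1..k}. PrX pr x * (am x 1 - am x 0)) = 0"
        apply (subst sum2[OF _ assms(5) jk(1) jk(2)[symmetric]])
        using q jk(2) Xi Xj by (auto simp: am_def)
      have amW: "Wobj k pr gam am = \<rho> * Rratio pr gam i q j"
        unfolding Wobj_def
        apply (subst sum2[OF _ assms(5) jk(1) jk(2)[symmetric]])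
      proof -
        have tD: "t * D = \<rho>" unfolding t_def using Dpos by simp
        have e1: "\<rho> * Rratio pr gam i q j = t * (wt pr gam i (1 - q) + wt pr gam j q)"
          using Dpos unfolding Rratio_def D_def[symmetric] tD[symmetric] by (simp add: field_simps)
        have e: "gam i (1-q) * (t / PrX pr i) * pr i (1-q) + gam j q * (t / PrX pr j) * pr j q
                 = \<rho> * Rratio pr gam i q j"
          unfolding e1 wt_def PrP_def by (simp add: algebra_simps)
        show "(\<Sum>p\<in>{0,1}. gam i p * am i p * pr i p) + (\<Sum>p\<in>{0,1}. gam j p * am j p * pr j p)
              = \<rho> * Rratio pr gam i q j"
          using e q jk(2) by (cases "q = 0") (auto simp: am_def)
      qed (auto simp: am_def)
      show ?thesis using maskge[OF ampol ampart ammask] amW by simp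
    qed
    define S where "S = {Rratio pr gam i p j - wavg pr gam i | j p. j \<in> {1..k} - {i} \<and> p \<in> {0,1::nat}}"
    have Seq: "S = (\<lambda>(j,p). Rratio pr gam i p j - wavg pr gam i) ` (({1..k} - {i}) \<times> {0,1})"
    proof (rule set_eqI, rule iffI)
      fix y assume "y \<in> S"
      then obtain j p where "j \<in> {1..k} - {i}" "p \<in> {0,1::nat}" "y = Rratio pr gam i p j - wavg pr gam i"
        unfolding S_def by blast
      thus "y \<in> (\<lambda>(j,p). Rratio pr gam i p j - wavg pr gam i) ` (({1..k} - {i}) \<times> {0,1})"
        by (intro image_eqI[of _ _ "(j,p)"]) auto
    next
      fix y assume "y \<in> (\<lambda>(j,p). Rratio pr gam i p j - wavg pr gam i) ` (({1..k} - {i}) \<times> {0,1::nat})"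
      then obtain jp where jp: "jp \<in> ({1..k} - {i}) \<times> {0,1::nat}"
          "y = (\<lambda>(j,p). Rratio pr gam i p j - wavg pr gam i) jp"
        by (rule imageE)
      obtain j p where jpe: "jp = (j,p)" by (cases jp)
      have "j \<in> {1..k} - {i}" "p \<in> {0,1::nat}" "y = Rratio pr gam i p j - wavg pr gam i"
        using jp jpe by auto
      thus "y \<in> S" unfolding S_def by blast
    qed
    have "\<exists>j. j \<in> {1..k} - {i}"
    proof (cases "i = 1")
      case True thus ?thesis using assms(1) by (intro exI[of _ 2]) auto
    next
      case False thus ?thesis using assms(1) by (intro exI[of _ 1]) auto
    qed
    hence Sfin: "finite S" "S \<noteq> {}" unfolding Seq by auto
    have "Max S \<in> S" using Sfin by (rule Max_in)
    then obtain j q where jq: "j \<in> {1..k} - {i}" "q \<in> {0,1::nat}"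
      "Max S = Rratio pr gam i q j - wavg pr gam i" unfolding S_def by blast
    have "\<rho> * max 0 (Max S) \<le> W_mask k pr gam \<rho> - \<rho> * wavg pr gam i"
    proof (cases "Max S \<le> 0")
      case True thus ?thesis using m1 by simp
    next
      case False
      have "\<rho> * max 0 (Max S) = \<rho> * Rratio pr gam i q j - \<rho> * wavg pr gam i"
        using False jq(3) by (simp add: right_diff_distrib)
      thus ?thesis using m2[OF jq(1,2)] by linarith
    qed
    thus ?thesis using fair unfolding S_def by simp
  qed
  show ?thesis using r0pos main by blast
qed

end
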